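(* For any $\mathcal{H}\subseteq\{0,1\}^{\mathcal{X}}$ with $\operatorname{L}(\mathcal{H})=1$ and any time horizon $T$, there exists a deterministic online learner which, under apple tasting feedback, makes at most $1+2\sqrt{T}$ mistakes on any sequence $(x_1,y_1),\dots,(x_T,y_T)$ realizable by $\mathcal{H}$ (i.e. $y_t=h(x_t)$ for all $t$ for some $h\in\mathcal{H}$).
   Context: Apple tasting feedback: in each round the learner receives $x_t\in\mathcal{X}$, predicts $\hat y_t\in\{0,1\}$, and observes the true label $y_t$ only if $\hat y_t=1$; a mistake is a round with $\hat y_t\ne y_t$. The Littlestone dimension $\operatorname{L}(\mathcal{H})$ is the largest $d$ such that there is a complete binary tree of depth $d$ with internal nodes labeled by instances of $\mathcal{X}$ that is shattered by $\mathcal{H}$: for every root-to-leaf path $\sigma\in\{0,1\}^d$ (with $x_i$ the instance at the node reached by prefix $\sigma_1\dots\sigma_{i-1}$) some $h\in\mathcal{H}$ satisfies $h(x_i)=\sigma_i$ for all $i$. *)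

theory Defs
  imports Complex_Main
begin

text \<open>Hypotheses are functions from the instance type 'x (the domain X = UNIV)
  to bool (labels 0/1 as False/True).
  A Littlestone tree of depth d is a map from prefixes (bool lists of length < d)
  to instances: the node reached by prefix sigma_1..sigma_(i-1) is labelled
  tr (take i sigma).\<close>

definition ltree_shattered :: "('x \<Rightarrow> bool) set \<Rightarrow> nat \<Rightarrow> (bool list \<Rightarrow> 'x) \<Rightarrow> bool" where
  "ltree_shattered H d tr \<longleftrightarrow>
     (\<forall>\<sigma>::bool list. length \<sigma> = d \<longrightarrow>
        (\<exists>h\<in>H. \<forall>i<d. h (tr (take i \<sigma>)) = \<sigma> ! i))"

definition shatters_depth :: "('x \<Rightarrow> bool) set \<Rightarrow> nat \<Rightarrow> bool" where
  "shatters_depth H d \<longleftrightarrow> (\<exists>tr. ltree_shattered H d tr)"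

definition littlestone_dim_eq :: "('x \<Rightarrow> bool) set \<Rightarrow> nat \<Rightarrow> bool" where
  "littlestone_dim_eq H d \<longleftrightarrow> shatters_depth H d \<and> (\<forall>d'. shatters_depth H d' \<longrightarrow> d' \<le> d)"

text \<open>A deterministic apple-tasting learner: given the feedback history
  (past instances with Some y if the learner predicted 1 and thus saw y,
  None if it predicted 0) and the current instance, it outputs a prediction.\<close>
type_synonym 'x at_learner = "('x \<times> bool option) list \<Rightarrow> 'x \<Rightarrow> bool"

fun at_mistakes_from :: "('x \<times> bool option) list \<Rightarrow> 'x at_learner \<Rightarrow> ('x \<times> bool) list \<Rightarrow> nat" where
  "at_mistakes_from hist L [] = 0"
| "at_mistakes_from hist L ((x, y) # rest) =
     (let p = L hist x in
       (if p \<noteq> y then 1 else 0) +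
       at_mistakes_from (hist @ [(x, if p then Some y else None)]) L rest)"

definition at_mistakes :: "'x at_learner \<Rightarrow> ('x \<times> bool) list \<Rightarrow> nat" where
  "at_mistakes L s = at_mistakes_from [] L s"

definition realizable :: "('x \<Rightarrow> bool) set \<Rightarrow> ('x \<times> bool) list \<Rightarrow> bool" where
  "realizable H s \<longleftrightarrow> (\<exists>h\<in>H. \<forall>(x, y)\<in>set s. h x = y)"

end

theory Submission
  imports Defs
begin

definition vs :: "('x \<Rightarrow> bool) set \<Rightarrow> ('x \<times> bool option) list \<Rightarrow> ('x \<Rightarrow> bool) set" where
  "vs H hist = {h\<in>H. \<forall>(x', ob)\<in>set hist. \<forall>y. ob = Some y \<longrightarrow> h x' = y}"

definition cnt :: "('x \<times> bool option) list \<Rightarrow> ('x \<Rightarrow> bool) \<Rightarrow> nat" where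
  "cnt hist g = length (filter (\<lambda>(x', ob). ob = None \<and> g x') hist)"

definition lrn :: "('x \<Rightarrow> bool) set \<Rightarrow> nat \<Rightarrow> 'x at_learner" where
  "lrn H k hist x = (let V = vs H hist in
     if \<not> (\<exists>h\<in>V. h x) then False
     else if (\<forall>h\<in>V. \<forall>h'\<in>V. \<not> h x \<longrightarrow> \<not> h' x \<longrightarrow> h = h') then True
     else k \<le> cnt hist (THE g. g \<in> V \<and> g x))"

definition Iv :: "('x \<Rightarrow> bool) set \<Rightarrow> ('x \<times> bool option) list \<Rightarrow> bool" where
  "Iv H hist \<longleftrightarrow> (\<forall>(x', ob)\<in>set hist. ob = None \<longrightarrow>
      (\<forall>g\<in>vs H hist. \<forall>g'\<in>vs H hist. g x' \<longrightarrow> g' x' \<longrightarrow> g = g'))"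

definition Ev :: "('x \<Rightarrow> bool) set \<Rightarrow> ('x \<times> bool option) list \<Rightarrow> nat" where
  "Ev H hist = (if \<exists>h\<in>vs H hist. \<exists>h'\<in>vs H hist. h \<noteq> h' then 1 else 0)"

definition Pv :: "('x \<Rightarrow> bool) set \<Rightarrow> ('x \<Rightarrow> bool) \<Rightarrow> ('x \<times> bool option) list \<Rightarrow> nat" where
  "Pv H hs hist = length (filter (\<lambda>(x', ob). ob = None \<and> (\<exists>g\<in>vs H hist. g \<noteq> hs \<and> g x')) hist)"

lemma L1:
  assumes ns: "\<not> shatters_depth H 2"
    and h: "h1 \<in> H" "h2 \<in> H" "\<not> h1 x" "\<not> h2 x" "h1 \<noteq> h2"
    and g: "g \<in> H" "g' \<in> H" "g x" "g' x"
  shows "g = g'"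
proof (rule ccontr)
  assume "g \<noteq> g'"
  then obtain x1 where x1: "g x1 \<noteq> g' x1" by (auto simp: fun_eq_iff)
  obtain x0 where x0: "h1 x0 \<noteq> h2 x0" using h(5) by (auto simp: fun_eq_iff)
  define tr where "tr = (\<lambda>l::bool list. if l = [] then x else if l = [False] then x0 else x1)"
  have "ltree_shattered H 2 tr" unfolding ltree_shattered_def
  proof (intro allI impI)
    fix \<sigma> :: "bool list" assume "length \<sigma> = 2"
    then obtain a b where \<sigma>: "\<sigma> = [a, b]"
      by (metis (no_types, lifting) Suc_length_conv length_0_conv numeral_2_eq_2)
    have i2: "\<And>i::nat. i < 2 \<Longrightarrow> i = 0 \<or> i = 1" by arith
    show "\<exists>h\<in>H. \<forall>i<2. h (tr (take i \<sigma>)) = \<sigma> ! i"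
    proof (cases a)
      case True
      obtain f where f: "f \<in> H" "f x" "f x1 = b" using x1 g by (cases b; cases "g x1"; auto)
      show ?thesis
      proof (intro bexI[of _ f] allI impI)
        fix i :: nat assume "i < 2"
        then have "i = 0 \<or> i = 1" by arith
        then show "f (tr (take i \<sigma>)) = \<sigma> ! i" using f True by (auto simp: \<sigma> tr_def)
      qed (use f in auto)
    next
      case False
      obtain f where f: "f \<in> H" "\<not> f x" "f x0 = b" using x0 h by (cases b; cases "h1 x0"; auto)
      show ?thesis
      proof (intro bexI[of _ f] allI impI)
        fix i :: nat assume "i < 2"
        then have "i = 0 \<or> i = 1" by arith
        then show "f (tr (take i \<sigma>)) = \<sigma> ! i" using f False by (auto simp: \<sigma> tr_def)
      qed (use f in auto)
    qed
  qed
  then show False using ns by (auto simp: shatters_depth_def)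
qed


lemma vs_None[simp]: "vs H (hist @ [(x, None)]) = vs H hist"
  by (auto simp: vs_def)

lemma vs_Some[simp]: "vs H (hist @ [(x, Some y)]) = {h \<in> vs H hist. h x = y}"
  by (auto simp: vs_def)

lemma cnt_None[simp]: "cnt (hist @ [(x, None)]) g = cnt hist g + (if g x then 1 else 0)"
  by (simp add: cnt_def)

lemma cnt_Some[simp]: "cnt (hist @ [(x, Some y)]) g = cnt hist g"
  by (simp add: cnt_def)

lemma len_filter_disj:
  "(\<And>e. e \<in> set xs \<Longrightarrow> A e \<Longrightarrow> B e \<Longrightarrow> False) \<Longrightarrow> (\<And>e. A e \<Longrightarrow> R e) \<Longrightarrow> (\<And>e. B e \<Longrightarrow> R e) \<Longrightarrow>
   length (filter A xs) + length (filter B xs) \<le> length (filter R xs)"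
proof (induction xs)
  case (Cons a xs)
  then have IH: "length (filter A xs) + length (filter B xs) \<le> length (filter R xs)" by auto
  have "\<not> (A a \<and> B a)" using Cons.prems(1) by auto
  then show ?case using IH Cons.prems by auto
qed simp

lemma len_filter_mono: "(\<And>e. A e \<Longrightarrow> R e) \<Longrightarrow> length (filter A xs) \<le> length (filter R xs)"
  by (induction xs) auto

lemma Pv_None: "Pv H hs (hist @ [(x, None)]) = Pv H hs hist + (if \<exists>g\<in>vs H hist. g \<noteq> hs \<and> g x then 1 else 0)"
  by (simp add: Pv_def)

lemma Pv_Some_le: "Pv H hs (hist @ [(x, Some y)]) \<le> Pv H hs hist"
  unfolding Pv_def by (simp, rule len_filter_mono, auto)

lemma Pv_elim:
  assumes "Iv H hist" "g \<in> vs H hist" "g x" "g \<noteq> hs"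
  shows "Pv H hs (hist @ [(x, Some False)]) + cnt hist g \<le> Pv H hs hist"
proof -
  have "length (filter (\<lambda>(x', ob). ob = None \<and> (\<exists>g\<in>vs H (hist @ [(x, Some False)]). g \<noteq> hs \<and> g x')) hist)
     + length (filter (\<lambda>(x', ob). ob = None \<and> g x') hist)
     \<le> length (filter (\<lambda>(x', ob). ob = None \<and> (\<exists>g\<in>vs H hist. g \<noteq> hs \<and> g x')) hist)"
  proof (rule len_filter_disj)
    fix e assume ein: "e \<in> set hist" and A: "(\<lambda>(x', ob). ob = None \<and> (\<exists>g\<in>vs H (hist @ [(x, Some False)]). g \<noteq> hs \<and> g x')) e"
      and B: "(\<lambda>(x', ob). ob = None \<and> g x') e"
    obtain x' ob where e: "e = (x', ob)" by (cases e)
    from A obtain g' where g': "g' \<in> vs H hist" "\<not> g' x" "g' x'" "ob = None" by (auto simp: e)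
    from B have "g x'" by (simp add: e)
    with g' assms(1,2) ein have "g = g'" unfolding Iv_def e by fastforce
    with g' assms(3) show False by simp
  qed (use assms in auto)
  then show ?thesis by (simp add: Pv_def cnt_def)
qed


lemma Iv_Some: "Iv H hist \<Longrightarrow> Iv H (hist @ [(x, Some y)])"
  unfolding Iv_def by auto

lemma Iv_None: "Iv H hist \<Longrightarrow> (\<forall>g\<in>vs H hist. \<forall>g'\<in>vs H hist. g x \<longrightarrow> g' x \<longrightarrow> g = g')
   \<Longrightarrow> Iv H (hist @ [(x, None)])"
  unfolding Iv_def by auto

lemma Ev_None[simp]: "Ev H (hist @ [(x, None)]) = Ev H hist"
  unfolding Ev_def by simp

lemma Ev_mono: "vs H hist' \<subseteq> vs H hist \<Longrightarrow> Ev H hist' \<le> Ev H hist"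
  unfolding Ev_def by auto

lemma ar1: "(E'::nat) \<le> E \<Longrightarrow> P' \<le> P + 1 \<Longrightarrow> (k+1)*(E'+c) + P' \<le> (k+1)*(E+c) + 1 + P"
proof -
  assume a: "E' \<le> E" "P' \<le> P + 1"
  have "(k+1)*(E'+c) \<le> (k+1)*(E+c)" using a by (intro mult_le_mono2) simp
  then show ?thesis using a by linarith
qed

lemma ar2: "(E'::nat) + 1 \<le> E \<Longrightarrow> P' \<le> P \<Longrightarrow> (k+1) + (k+1)*(E'+c) + P' \<le> (k+1)*(E+c) + 1 + P"
proof -
  assume a: "E' + 1 \<le> E" "P' \<le> P"
  have "(k+1)*(E'+1+c) \<le> (k+1)*(E+c)" using a by (intro mult_le_mono2) simp
  then show ?thesis using a by (simp add: algebra_simps)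
qed

lemma ar3: "(E'::nat) \<le> E \<Longrightarrow> P' + k \<le> P \<Longrightarrow> (k+1) + (k+1)*(E'+c) + P' \<le> (k+1)*(E+c) + 1 + P"
proof -
  assume a: "E' \<le> E" "P' + k \<le> P"
  have "(k+1)*(E'+c) \<le> (k+1)*(E+c)" using a by (intro mult_le_mono2) simp
  then show ?thesis using a by linarith
qed

lemma ar4: "(c'::nat) + 1 = c \<Longrightarrow> (k+1) + (k+1)*(E+c') + P \<le> (k+1)*(E+c) + 1 + P"
  by (drule sym) (simp add: algebra_simps)

lemma step:
  fixes k :: nat
  assumes ns: "\<not> shatters_depth H 2" and hs: "hs \<in> vs H hist" "hs x = y" and iv: "Iv H hist"
  defines "p \<equiv> lrn H k hist x"
  defines "hist' \<equiv> hist @ [(x, if p then Some y else None)]"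
  shows "hs \<in> vs H hist' \<and> Iv H hist' \<and>
    (k+1) * (if p \<noteq> y then 1 else 0) + ((k+1) * (Ev H hist' + (k - cnt hist' hs)) + Pv H hs hist')
      \<le> (k+1) * (Ev H hist + (k - cnt hist hs)) + 1 + Pv H hs hist"
proof -
  define V where "V = vs H hist"
  have VH: "V \<subseteq> H" by (auto simp: V_def vs_def)
  have hsV: "hs \<in> V" using hs V_def by simp
  show ?thesis
  proof (cases "\<exists>h\<in>V. h x")
    case False
    then have p: "\<not> p" unfolding p_def lrn_def V_def[symmetric] Let_def by auto
    have y: "\<not> y" using False hsV hs(2) by auto
    have h': "hist' = hist @ [(x, None)]" using p by (simp add: hist'_def)
    have "Pv H hs hist' = Pv H hs hist" using False by (auto simp: h' Pv_None V_def)
    moreover have "Iv H hist'" using False iv by (auto simp: h' V_def intro!: Iv_None)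
    ultimately show ?thesis using p y hs False hsV
      by (simp add: h')
  next
    case True
    note T1 = True
    show ?thesis
    proof (cases "\<forall>h\<in>V. \<forall>h'\<in>V. \<not> h x \<longrightarrow> \<not> h' x \<longrightarrow> h = h'")
      case True
      then have p: "p" using T1 unfolding p_def lrn_def V_def[symmetric] Let_def by simp
      have h': "hist' = hist @ [(x, Some y)]" using p by (simp add: hist'_def)
      have sub: "vs H hist' \<subseteq> vs H hist" by (auto simp: h')
      have hs': "hs \<in> vs H hist'" using hs by (simp add: h')
      have iv': "Iv H hist'" using iv by (simp add: h' Iv_Some)
      have Pv: "Pv H hs hist' \<le> Pv H hs hist" by (simp add: h' Pv_Some_le)
      have c: "cnt hist' hs = cnt hist hs" by (simp add: h')
      show ?thesis
      proof (cases y)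
        case True
        then show ?thesis using hs' iv' p c Pv Ev_mono[OF sub] ar1[of "Ev H hist'" "Ev H hist" "Pv H hs hist'" "Pv H hs hist" k "k - cnt hist hs"]
          by simp
      next
        case False
        have E1: "Ev H hist = 1" using T1 hsV hs(2) False unfolding Ev_def V_def by (metis (full_types))
        have E0: "Ev H hist' = 0" using True False unfolding Ev_def V_def h' by auto
        show ?thesis using hs' iv' p c Pv E1 E0 False ar2[of "Ev H hist'" "Ev H hist" "Pv H hs hist'" "Pv H hs hist" k "k - cnt hist hs"]
          by simp
      qed
    next
      case False
      then obtain h1 h2 where h12: "h1 \<in> V" "h2 \<in> V" "\<not> h1 x" "\<not> h2 x" "h1 \<noteq> h2" by blast
      have uniq: "\<forall>g\<in>V. \<forall>g'\<in>V. g x \<longrightarrow> g' x \<longrightarrow> g = g'"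
        using L1[OF ns] h12 VH by blast
      obtain g where g: "g \<in> V" "g x" using T1 by blast
      have theg: "(THE g. g \<in> V \<and> g x) = g" using g uniq by (intro the_equality) auto
      have pdef: "p = (k \<le> cnt hist g)" using T1 False unfolding p_def lrn_def V_def[symmetric] Let_def theg by auto
      show ?thesis
      proof (cases "k \<le> cnt hist g")
        case True
        then have p: "p" using pdef by simp
        have h': "hist' = hist @ [(x, Some y)]" using p by (simp add: hist'_def)
        have sub: "vs H hist' \<subseteq> vs H hist" by (auto simp: h')
        have hs': "hs \<in> vs H hist'" using hs by (simp add: h')
        have iv': "Iv H hist'" using iv by (simp add: h' Iv_Some)
        have Pv: "Pv H hs hist' \<le> Pv H hs hist" by (simp add: h' Pv_Some_le)
        have c: "cnt hist' hs = cnt hist hs" by (simp add: h')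
        show ?thesis
        proof (cases y)
          case True
          then show ?thesis using hs' iv' p c Pv Ev_mono[OF sub] ar1[of "Ev H hist'" "Ev H hist" "Pv H hs hist'" "Pv H hs hist" k "k - cnt hist hs"]
            by simp
        next
          case False
          have "g \<noteq> hs" using g hs(2) False by auto
          then have "Pv H hs hist' + cnt hist g \<le> Pv H hs hist"
            using Pv_elim[OF iv, of g x hs] g False by (simp add: h' V_def)
          then have Pk: "Pv H hs hist' + k \<le> Pv H hs hist" using True by linarith
          show ?thesis using hs' iv' p c Pk False Ev_mono[OF sub] ar3[where E'="Ev H hist'" and E="Ev H hist" and P'="Pv H hs hist'" and P="Pv H hs hist" and k=k and c="k - cnt hist hs"]
            by simp
        qed
      next
        case False
        then have p: "\<not> p" using pdef by simp
        have h': "hist' = hist @ [(x, None)]" using p by (simp add: hist'_def)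
        have iv': "Iv H hist'" using iv uniq by (auto simp: h' V_def intro!: Iv_None)
        have hs': "hs \<in> vs H hist'" using hs by (simp add: h')
        show ?thesis
        proof (cases y)
          case True
          have "hs = g" using uniq hsV g hs(2) True by blast
          then have c: "cnt hist' hs = cnt hist hs + 1" "cnt hist hs < k" using g False by (simp_all add: h')
          have "\<not> (\<exists>g'\<in>V. g' \<noteq> hs \<and> g' x)" using uniq g \<open>hs = g\<close> by blast
          then have Pv: "Pv H hs hist' = Pv H hs hist" by (simp add: h' Pv_None V_def)
          have E: "Ev H hist' = Ev H hist" by (simp add: h')
          have "(k - cnt hist' hs) + 1 = k - cnt hist hs" using c by simp
          then show ?thesis using hs' iv' p Pv E True ar4[of "k - cnt hist' hs" "k - cnt hist hs" k "Ev H hist" "Pv H hs hist"]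
            by simp
        next
          case False
          have c: "cnt hist' hs = cnt hist hs" using hs(2) False by (simp add: h')
          have Pv: "Pv H hs hist' \<le> Pv H hs hist + 1" by (simp add: h' Pv_None)
          have E: "Ev H hist' = Ev H hist" by (simp add: h')
          show ?thesis using hs' iv' p c Pv E False ar1[of "Ev H hist'" "Ev H hist" "Pv H hs hist'" "Pv H hs hist" k "k - cnt hist hs"]
            by simp
        qed
      qed
    qed
  qed
qed


lemma main:
  fixes k :: nat
  assumes ns: "\<not> shatters_depth H 2"
  shows "hs \<in> vs H hist \<Longrightarrow> \<forall>(x, y)\<in>set rest. hs x = y \<Longrightarrow> Iv H hist \<Longrightarrow>
    (k+1) * at_mistakes_from hist (lrn H k) rest
      \<le> (k+1) * (Ev H hist + (k - cnt hist hs)) + length rest + Pv H hs hist"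
proof (induction rest arbitrary: hist)
  case Nil
  then show ?case by simp
next
  case (Cons a rest)
  obtain x y where a: "a = (x, y)" by (cases a)
  have hx: "hs x = y" using Cons.prems(2) a by auto
  define p where "p = lrn H k hist x"
  define hist' where "hist' = hist @ [(x, if p then Some y else None)]"
  have st: "hs \<in> vs H hist' \<and> Iv H hist' \<and>
    (k+1) * (if p \<noteq> y then 1 else 0) + ((k+1) * (Ev H hist' + (k - cnt hist' hs)) + Pv H hs hist')
      \<le> (k+1) * (Ev H hist + (k - cnt hist hs)) + 1 + Pv H hs hist"
    using step[OF ns Cons.prems(1) hx Cons.prems(3), of k] unfolding p_def hist'_def by simp
  have IH: "(k+1) * at_mistakes_from hist' (lrn H k) rest
      \<le> (k+1) * (Ev H hist' + (k - cnt hist' hs)) + length rest + Pv H hs hist'"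
    using Cons.IH[of hist'] st Cons.prems(2) by auto
  have eq: "at_mistakes_from hist (lrn H k) (a # rest) = (if p \<noteq> y then 1 else 0) + at_mistakes_from hist' (lrn H k) rest"
    by (simp add: a Let_def p_def hist'_def)
  have "(k+1) * at_mistakes_from hist (lrn H k) (a # rest)
     = (k+1) * (if p \<noteq> y then 1 else 0) + (k+1) * at_mistakes_from hist' (lrn H k) rest"
    by (simp only: eq add_mult_distrib2)
  then show ?case using IH st by simp
qed

theorem theorem5:
  fixes H :: "('x \<Rightarrow> bool) set" and T :: nat
  assumes "littlestone_dim_eq H 1"
  shows "\<exists>L :: 'x at_learner. \<forall>s. length s = T \<longrightarrow> realizable H s \<longrightarrow>
           real (at_mistakes L s) \<le> 1 + 2 * sqrt (real T)"
proof -
  have ns: "\<not> shatters_depth H 2" using assms unfolding littlestone_dim_eq_def by fastforce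
  define k where "k = nat \<lfloor>sqrt (real T)\<rfloor>"
  have k1: "real k \<le> sqrt (real T)" unfolding k_def by simp
  have k2: "sqrt (real T) < real k + 1" unfolding k_def by linarith
  show ?thesis
  proof (intro exI[of _ "lrn H k"] allI impI)
    fix s :: "('x \<times> bool) list" assume len: "length s = T" and r: "realizable H s"
    obtain hs where hs: "hs \<in> H" "\<forall>(x, y)\<in>set s. hs x = y" using r unfolding realizable_def by blast
    have hs0: "hs \<in> vs H []" using hs by (simp add: vs_def)
    have iv0: "Iv H []" by (simp add: Iv_def)
    have E: "Ev H [] \<le> 1" by (simp add: Ev_def)
    have "(k+1) * at_mistakes_from [] (lrn H k) s \<le> (k+1) * (Ev H [] + (k - cnt [] hs)) + T + Pv H hs []"
      using main[OF ns hs0 hs(2) iv0, of k] len by simp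
    also have "\<dots> = (k+1) * (Ev H [] + k) + T"
      by (simp add: cnt_def Pv_def)
    also have "\<dots> \<le> (k+1) * (1 + k) + T"
      using E by (intro add_right_mono mult_le_mono2) simp
    finally have M: "(k+1) * at_mistakes L s \<le> (k+1) * (1 + k) + T" if "L = lrn H k" for L
      using that by (simp add: at_mistakes_def)
    define m where "m = at_mistakes (lrn H k) s"
    have Mr: "(real k + 1) * real m \<le> (real k + 1) * (1 + real k) + real T"
    proof -
      have "real ((k+1) * m) \<le> real ((k+1) * (1 + k) + T)"
        using M[OF refl] unfolding m_def[symmetric] by (simp only: of_nat_le_iff)
      then show ?thesis by (simp add: algebra_simps)
    qed
    have "real T = sqrt (real T) * sqrt (real T)" by simp
    also have "\<dots> \<le> sqrt (real T) * (real k + 1)" using k2 by (intro mult_left_mono) auto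
    finally have TT: "real T \<le> sqrt (real T) * (real k + 1)" .
    have "(real k + 1) * real m \<le> (real k + 1) * (1 + 2 * sqrt (real T))"
    proof -
      have a: "(real k + 1) * real k \<le> (real k + 1) * sqrt (real T)" by (intro mult_left_mono k1) simp
      have b: "(real k + 1) * (1 + real k) = (real k + 1) + (real k + 1) * real k" by (simp add: algebra_simps)
      have c: "(real k + 1) * (1 + 2 * sqrt (real T)) = (real k + 1) + (real k + 1) * sqrt (real T) + sqrt (real T) * (real k + 1)"
        by (simp add: algebra_simps)
      show ?thesis using Mr TT a b c by linarith
    qed
    then have "real m \<le> 1 + 2 * sqrt (real T)"
      by (rule mult_left_le_imp_le) simp
    then show "real (at_mistakes (lrn H k) s) \<le> 1 + 2 * sqrt (real T)" by (simp add: m_def)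
  qed
qed

end
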